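(* Let $A$ be a ring for which every element is a sum of units. Then $A$ is the only factroid of $A$ that contains a left-regular element. Thus, if $A$ is moreover an integral domain, then the only factroids of $A$ are $\{0\}$ and $A$.
   Context: Rings are unital, not necessarily commutative. $\mathrm{reg}(A)$ denotes the set of left-regular elements (left nonzerodivisors) of $A$. A factroid of $A$ is an additive subgroup $F$ of $A$ such that for all $a\in A$ and $b\in\mathrm{reg}(A)$, $ba\in F$ implies $a\in F$. *)

theory Defs
  imports Main
begin

definition is_unit :: "'a::ring_1 \<Rightarrow> bool" where
  "is_unit u \<longleftrightarrow> (\<exists>v. u * v = 1 \<and> v * u = 1)"

definition sum_of_units :: "'a::ring_1 \<Rightarrow> bool" where
  "sum_of_units x \<longleftrightarrow> (\<exists>us. (\<forall>u\<in>set us. is_unit u) \<and> x = sum_list us)"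

definition reg :: "'a::ring_1 set" where
  "reg = {b. \<forall>a. b * a = 0 \<longrightarrow> a = 0}"

definition additive_subgroup :: "'a::ring_1 set \<Rightarrow> bool" where
  "additive_subgroup F \<longleftrightarrow> 0 \<in> F \<and> (\<forall>x\<in>F. \<forall>y\<in>F. x + y \<in> F) \<and> (\<forall>x\<in>F. - x \<in> F)"

definition factroid :: "'a::ring_1 set \<Rightarrow> bool" where
  "factroid F \<longleftrightarrow> additive_subgroup F \<and> (\<forall>a. \<forall>b\<in>reg. b * a \<in> F \<longrightarrow> a \<in> F)"

definition integral_domain :: "'a::ring_1 itself \<Rightarrow> bool" where
  "integral_domain _ \<longleftrightarrow> (\<forall>x y::'a. x * y = y * x) \<and> (0::'a) \<noteq> 1 \<and>
     (\<forall>x y::'a. x * y = 0 \<longrightarrow> x = 0 \<or> y = 0)"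

end

theory Submission
  imports Defs
begin

lemma unit_in_F:
  fixes F :: "'a::ring_1 set"
  assumes f: "factroid F" and b: "b \<in> F" "b \<in> reg" and u: "is_unit u"
  shows "u \<in> F"
proof -
  obtain v where uv: "u * v = 1" "v * u = 1" using u unfolding is_unit_def by blast
  have r: "b * v \<in> reg"
    unfolding reg_def
  proof (intro CollectI allI impI)
    fix x assume "b * v * x = 0"
    hence "v * x = 0" using b(2) unfolding reg_def by (simp add: mult.assoc)
    hence "u * (v * x) = 0" by simp
    thus "x = 0" by (simp add: mult.assoc[symmetric] uv)
  qed
  have "b * v * u \<in> F" using b(1) by (simp add: mult.assoc uv)
  thus ?thesis using f r unfolding factroid_def by blast
qed

lemma sum_in_F:
  fixes F :: "'a::ring_1 set"
  assumes f: "factroid F" and b: "b \<in> F" "b \<in> reg"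
  shows "\<forall>u\<in>set us. is_unit u \<Longrightarrow> sum_list us \<in> F"
proof (induction us)
  case Nil
  then show ?case using f unfolding factroid_def additive_subgroup_def by simp
next
  case (Cons a us)
  then have "a \<in> F" using unit_in_F[OF f b] by simp
  with Cons show ?case using f unfolding factroid_def additive_subgroup_def by simp
qed

theorem theorem4p12:
  assumes "\<forall>x::'a::ring_1. sum_of_units x"
  shows "(\<forall>F::'a set. factroid F \<and> F \<inter> reg \<noteq> {} \<longrightarrow> F = UNIV)
    \<and> (integral_domain TYPE('a) \<longrightarrow> (\<forall>F::'a set. factroid F \<longrightarrow> F = {0} \<or> F = UNIV))"
proof -
  have A: "F = UNIV" if f1: "factroid F" and f2: "F \<inter> reg \<noteq> {}" for F :: "'a set"
  proof -
    obtain b where b: "b \<in> F" "b \<in> reg" using f2 by blast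
    show ?thesis
    proof (rule set_eqI)
      fix x :: 'a
      obtain us where "\<forall>u\<in>set us. is_unit u" "x = sum_list us"
        using assms unfolding sum_of_units_def by blast
      thus "x \<in> F \<longleftrightarrow> x \<in> UNIV" using sum_in_F[OF f1 b] by simp
    qed
  qed
  moreover have "F = {0} \<or> F = UNIV" if d: "integral_domain TYPE('a)" and f: "factroid F" for F :: "'a set"
  proof (cases "\<exists>x\<in>F. x \<noteq> 0")
    case True
    then obtain x where x: "x \<in> F" "x \<noteq> 0" by blast
    have "x \<in> reg" using d x(2) unfolding integral_domain_def reg_def by blast
    thus ?thesis using A[OF f] x(1) by blast
  next
    case False
    have "0 \<in> F" using f unfolding factroid_def additive_subgroup_def by simp
    thus ?thesis using False by blast
  qed
  ultimately show ?thesis by blast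
qed

end
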